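(* Let $q$ be an odd prime power, $s=(q-1)/2$, $a_0,a_1\in\mathbb{F}_q^*$ and $r_0,r_1$ positive integers. Let $$f(x)=\tfrac12 a_0x^{r_0}(1+x^s)+\tfrac12 a_1x^{r_1}(1-x^s).$$ If $f$ is a permutation polynomial of $\mathbb{F}_q$, then its inverse over $\mathbb{F}_q$ is given by $$f^{-1}(x)=\frac12\left(\frac{x}{a_0}\right)^{\tilde r_0}\left(1+\left(\frac{x}{a_0}\right)^s\right)+\frac12(-1)^{t_1}\left(\frac{x}{a_1}\right)^{\tilde r_1}\left(1+(-1)^{r_1}\left(\frac{x}{a_1}\right)^s\right),$$ where $\tilde r_i,t_i\in\mathbb{Z}$ satisfy $1\le\tilde r_i<s$ and $r_i\tilde r_i+st_i=1$ for $i=0,1$.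
   Context: A polynomial $f\in\mathbb{F}_q[x]$ is a permutation polynomial of $\mathbb{F}_q$ if it induces a bijection of $\mathbb{F}_q$. A polynomial $g$ is the inverse of $f$ over $\mathbb{F}_q$ if $g(f(c))=c$ for all $c\in\mathbb{F}_q$. *)

theory Defs
  imports "HOL-Computational_Algebra.Polynomial"
begin

definition perm_poly :: "'a::{finite,field} poly \<Rightarrow> bool" where
  "perm_poly p \<longleftrightarrow> bij (poly p)"

definition inverse_poly_of :: "'a::{finite,field} poly \<Rightarrow> 'a poly \<Rightarrow> bool" where
  "inverse_poly_of g f \<longleftrightarrow> (\<forall>c. poly g (poly f c) = c)"

definition f_poly :: "'a::field \<Rightarrow> 'a \<Rightarrow> nat \<Rightarrow> nat \<Rightarrow> nat \<Rightarrow> 'a poly" where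
  "f_poly a0 a1 r0 r1 s =
     smult (a0 / 2) ([:0, 1:] ^ r0 * (1 + [:0, 1:] ^ s))
   + smult (a1 / 2) ([:0, 1:] ^ r1 * (1 - [:0, 1:] ^ s))"

definition g_poly :: "'a::field \<Rightarrow> 'a \<Rightarrow> nat \<Rightarrow> nat \<Rightarrow> nat \<Rightarrow> int \<Rightarrow> nat \<Rightarrow> 'a poly" where
  "g_poly a0 a1 r1 rt0 rt1 t1 s =
     smult (1 / 2) ([:0, 1 / a0:] ^ rt0 * (1 + [:0, 1 / a0:] ^ s))
   + smult (((-1) powi t1) / 2)
       ([:0, 1 / a1:] ^ rt1 * (1 + smult ((-1) ^ r1) ([:0, 1 / a1:] ^ s)))"

end

theory Submission
  imports Defs
begin

lemma ff_pow_card: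
  fixes x :: "'a :: {finite,field}"
  shows   "x ^ card (UNIV :: 'a set) = x"
proof (cases "x = 0")
  case False
  have "x * (\<Prod>y\<in>UNIV-{0}. x * y) = x * x ^ (card (UNIV :: 'a set) - 1) * \<Prod>(UNIV-{0})"
    by (simp add: prod.distrib mult_ac)
  also have "x * x ^ (card (UNIV :: 'a set) - 1) = x ^ Suc (card (UNIV :: 'a set) - 1)"
    by (subst power_Suc) auto
  also have "Suc (card (UNIV :: 'a set) - 1) = card (UNIV :: 'a set)"
    using finite_UNIV_card_ge_0[where ?'a = 'a] by simp
  also have "(\<Prod>y\<in>UNIV-{0}. x * y) = (\<Prod>y\<in>UNIV-{0}. y)"
    by (rule prod.reindex_bij_witness[of _ "\<lambda>y. y / x" "\<lambda>y. x * y"]) (use False in auto)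
  finally show ?thesis
    by simp
qed (use finite_UNIV_card_ge_0[where ?'a = 'a] in auto)

lemma pc: "((x::'a::monoid_mult)^m)^n = (x^n)^m"
  by (metis power_mult mult.commute)

lemma chi_pm:
  fixes x :: "'a :: {finite,field}"
  assumes "card (UNIV :: 'a set) = 2 * s + 1" "x \<noteq> 0"
  shows "x ^ s = 1 \<or> x ^ s = -1"
proof -
  have "x * (x ^ s) ^ 2 = x * 1"
    using ff_pow_card[of x] assms(1) by (simp add: power_add power_mult pc[of x 2 s] mult.commute)
  hence "(x ^ s) ^ 2 = 1" using assms(2) by simp
  thus ?thesis by (simp add: power2_eq_1_iff)
qed

theorem corollary4p1:
  fixes a0 a1 :: "'a::{finite,field}"
    and r0 r1 s rt0 rt1 :: nat and t0 t1 :: int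
  assumes "odd (card (UNIV :: 'a set))"
    and "s = (card (UNIV :: 'a set) - 1) div 2"
    and "a0 \<noteq> 0" and "a1 \<noteq> 0"
    and "r0 > 0" and "r1 > 0"
    and "1 \<le> rt0" and "rt0 < s" and "int r0 * int rt0 + int s * t0 = 1"
    and "1 \<le> rt1" and "rt1 < s" and "int r1 * int rt1 + int s * t1 = 1"
    and "perm_poly (f_poly a0 a1 r0 r1 s)"
  shows "inverse_poly_of (g_poly a0 a1 r1 rt0 rt1 t1 s) (f_poly a0 a1 r0 r1 s)"
proof -
  define q where "q = card (UNIV :: 'a set)"
  have q: "q = 2 * s + 1" using assms(1,2) unfolding q_def by presburger
  have s1: "s \<ge> 1" using assms(7,8) by simp
  define F where "F = poly (f_poly a0 a1 r0 r1 s)"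
  have bij: "bij F" using assms(13) unfolding F_def perm_poly_def .
  have F: "F c = a0/2 * (c^r0 * (1 + c^s)) + a1/2 * (c^r1 * (1 - c^s))" for c
    unfolding F_def f_poly_def by simp
  have two: "(2::'a) \<noteq> 0"
  proof
    assume "(2::'a) = 0"
    hence "F c = 0" for c unfolding F by simp
    hence "F 0 = F 1" by simp
    with bij have "(0::'a) = 1" by (metis bij_pointE)
    thus False by simp
  qed
  have chi: "x \<noteq> 0 \<Longrightarrow> x ^ s = 1 \<or> x ^ s = -1" for x :: 'a
    using chi_pm[of s x] q unfolding q_def by simp
  have Fp: "c ^ s = 1 \<Longrightarrow> F c = a0 * c ^ r0" for c
    unfolding F using two by (simp add: field_simps)
  have Fm: "c ^ s = -1 \<Longrightarrow> F c = a1 * c ^ r1" for c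
    unfolding F using two by (simp add: field_simps)
  have F0: "F 0 = 0" unfolding F using assms(5,6) by (simp add: power_0_left)
  obtain k0 where k0: "r0 * rt0 = 1 + s * k0"
  proof -
    have "t0 \<le> 0"
    proof (rule ccontr)
      assume "\<not> t0 \<le> 0"
      hence "int s * t0 \<ge> int s" using s1 by simp
      moreover have "int r0 * int rt0 \<ge> 1"
      proof -
        have "r0 * rt0 \<ge> 1" using assms(5,7) by (simp add: Suc_le_eq)
        thus ?thesis by (metis of_nat_mult of_nat_1 of_nat_le_iff)
      qed
      ultimately show False using assms(9) s1 by linarith
    qed
    hence "int (r0 * rt0) = int (1 + s * nat (- t0))" using assms(9) by simp
    thus ?thesis using that by (simp only: of_nat_eq_iff)
  qed
  obtain k1 where k1: "r1 * rt1 = 1 + s * k1" and t1: "t1 = - int k1"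
  proof -
    have "t1 \<le> 0"
    proof (rule ccontr)
      assume "\<not> t1 \<le> 0"
      hence "int s * t1 \<ge> int s" using s1 by simp
      moreover have "int r1 * int rt1 \<ge> 1"
      proof -
        have "r1 * rt1 \<ge> 1" using assms(6,10) by (simp add: Suc_le_eq)
        thus ?thesis by (metis of_nat_mult of_nat_1 of_nat_le_iff)
      qed
      ultimately show False using assms(12) s1 by linarith
    qed
    hence "int (r1 * rt1) = int (1 + s * nat (- t1))" using assms(12) by simp
    hence "r1 * rt1 = 1 + s * nat (- t1)" by (simp only: of_nat_eq_iff)
    thus ?thesis using \<open>t1 \<le> 0\<close> by (intro that[of "nat (-t1)"]) simp_all
  qed
  have pw1: "((-1::'a) powi t1) = (-1) ^ k1"
    unfolding t1 by (cases "even k1") (simp_all add: power_int_minus)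
  have K: "a0 ^ s = - (a1 ^ s * (-1) ^ r1)"
  proof (rule ccontr)
    assume nK: "a0 ^ s \<noteq> - (a1 ^ s * (-1) ^ r1)"
    have a0s: "a0 ^ s = 1 \<or> a0 ^ s = -1" using chi assms(3) by blast
    have a1s: "a1 ^ s = 1 \<or> a1 ^ s = -1" using chi assms(4) by blast
    have e: "(-1::'a) ^ r1 = 1 \<or> (-1::'a) ^ r1 = -1" by (cases "even r1") simp_all
    have c: "a0 ^ s = a1 ^ s * (-1) ^ r1"
      using a0s a1s e nK by auto
    have all: "x \<noteq> 0 \<Longrightarrow> (F x) ^ s = a0 ^ s" for x
    proof -
      assume x: "x \<noteq> 0"
      from chi[OF x] show ?thesis
      proof
        assume h: "x ^ s = 1"
        show ?thesis using Fp[OF h] h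
          by (simp add: power_mult_distrib pc[of _ r0 s])
      next
        assume h: "x ^ s = -1"
        have "(F x) ^ s = a1 ^ s * (x ^ s) ^ r1" using Fm[OF h]
          by (simp add: power_mult_distrib pc[of _ r1 s])
        thus ?thesis using h c by simp
      qed
    qed
    obtain x where x: "F x = 1" using bij by (metis bij_pointE)
    have "x \<noteq> 0" using x F0 by auto
    hence a01: "a0 ^ s = 1" using all[of x] x by simp
    have roots: "UNIV - {0::'a} \<subseteq> {y. poly ([:-1:] + monom 1 s) y = (0::'a)}"
    proof
      fix y :: 'a assume "y \<in> UNIV - {0}"
      then obtain x where "y = F x" "x \<noteq> 0" using bij F0 by (metis DiffD2 bij_pointE insertI1)
      thus "y \<in> {y. poly ([:-1:] + monom 1 s) y = 0}" using all a01 by (simp add: poly_monom)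
    qed
    have deg: "degree ([:-1:] + monom (1::'a) s) = s" using s1 by (simp add: degree_add_eq_right degree_monom_eq)
    have nz: "[:-1:] + monom (1::'a) s \<noteq> 0" using deg s1 by auto
    have "card (UNIV - {0::'a}) \<le> card {y. poly ([:-1:] + monom 1 s) y = (0::'a)}"
      by (rule card_mono[OF _ roots]) simp
    also have "\<dots> \<le> s" using card_poly_roots_bound[OF nz] deg by simp
    finally have "q - 1 \<le> s" unfolding q_def by simp
    thus False using q s1 by simp
  qed
  have G: "poly (g_poly a0 a1 r1 rt0 rt1 t1 s) y =
      1/2 * ((y/a0)^rt0 * (1 + (y/a0)^s)) + (-1)^k1/2 * ((y/a1)^rt1 * (1 + (-1)^r1 * (y/a1)^s))" for y
    unfolding g_poly_def pw1 using assms(3,4) two by (simp add: field_simps)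
  show ?thesis
    unfolding inverse_poly_of_def F_def[symmetric]
  proof
    fix c :: 'a
    show "poly (g_poly a0 a1 r1 rt0 rt1 t1 s) (F c) = c"
    proof (cases "c = 0")
      case True
      thus ?thesis using F0 G assms(7,10) by (simp add: power_0_left)
    next
      case False
      from chi[OF False] show ?thesis
      proof
        assume h: "c ^ s = 1"
        have 1: "(F c / a0) ^ rt0 = c"
        proof -
          have "(F c / a0) ^ rt0 = c ^ (r0 * rt0)" using Fp[OF h] assms(3) by (simp add: power_mult)
          also have "\<dots> = c" unfolding k0 using h by (simp add: power_mult)
          finally show ?thesis .
        qed
        have 2: "(F c / a0) ^ s = 1" using Fp[OF h] assms(3) h
          by (simp add: pc[of _ r0 s])
        have 3: "(F c / a1) ^ s = a0 ^ s / a1 ^ s" using Fp[OF h] assms(3) h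
          by (simp add: power_divide power_mult_distrib pc[of _ r0 s])
        have 4: "1 + (-1)^r1 * (F c / a1) ^ s = 0"
          using assms(4) unfolding 3 K
          by (simp add: field_simps power_add[symmetric])
        show ?thesis unfolding G 1 2 4 using two by simp
      next
        assume h: "c ^ s = -1"
        have 1: "(F c / a1) ^ rt1 = c * (-1) ^ k1"
        proof -
          have "(F c / a1) ^ rt1 = c ^ (r1 * rt1)" using Fm[OF h] assms(4) by (simp add: power_mult)
          also have "\<dots> = c * (-1) ^ k1" unfolding k1 using h by (simp add: power_mult)
          finally show ?thesis .
        qed
        have 2: "(F c / a1) ^ s = (-1) ^ r1" using Fm[OF h] assms(4) h
          by (simp add: pc[of _ r1 s])
        have 3: "(F c / a0) ^ s = a1 ^ s * (-1) ^ r1 / a0 ^ s" using Fm[OF h] h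
          by (simp add: power_divide power_mult_distrib pc[of _ r1 s])
        have a0s: "a0 ^ s \<noteq> 0" using assms(3) by simp
        have 4: "1 + (F c / a0) ^ s = 0"
          unfolding 3 using K a0s by (simp add: field_simps)
        have 5: "(-1::'a) ^ k1 * (-1) ^ k1 = 1" by (simp add: power_add[symmetric])
        have 6: "(-1::'a) ^ r1 * (-1) ^ r1 = 1" by (simp add: power_add[symmetric])
        show ?thesis unfolding G 1 2 4 using two 5 6
          by (simp add: field_simps)
      qed
    qed
  qed
qed

end
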